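(* Let $(\xi_n)_{n\geq1}$ be i.i.d. with $\mathbf{P}(\xi_1=1)=p=1-\mathbf{P}(\xi_1=-1)$, $p\in(0,1)$. For $x\geq1$ set $W_0:=x$, $B_1:=1$, $W_n:=W_{n-1}+\xi_nB_n$, $B_{n+1}:=B_n2^{\xi_n}$ for $n\geq1$, and $f(x,p):=\mathbf{P}(W_n\leq0\text{ for some }n)$. Then for each fixed $x>2$, the function $p\mapsto f(x,p)$ is strictly increasing on $(0,1/2)$.
   Context: $f(x,p)$ is the ruin probability of a gambler with initial fortune $x$ who starts by betting $1$, doubles the bet after each win and halves it after each loss, winning each round independently with probability $p$. *)

theory Defs
  imports "HOL-Probability.Probability"
begin

text \<open>A play is an infinite sequence of coin outcomes; True = the gambler wins
  the round (xi = 1), False = loses (xi = -1).  Component n (0-based) of the stream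
  is xi_(n+1).\<close>

definition xi :: "bool stream \<Rightarrow> nat \<Rightarrow> real" where
  "xi \<omega> n = (if \<omega> !! n then 1 else -1)"

text \<open>bet \<omega> n = B_(n+1): B_1 = 1, B_(n+1) = B_n * 2 powr xi_n.\<close>
fun bet :: "bool stream \<Rightarrow> nat \<Rightarrow> real" where
  "bet \<omega> 0 = 1"
| "bet \<omega> (Suc n) = bet \<omega> n * 2 powr xi \<omega> n"

fun fortune :: "real \<Rightarrow> bool stream \<Rightarrow> nat \<Rightarrow> real" where
  "fortune x \<omega> 0 = x"
| "fortune x \<omega> (Suc n) = fortune x \<omega> n + xi \<omega> n * bet \<omega> n"

definition coin_space :: "real \<Rightarrow> bool stream measure" where
  "coin_space p = stream_space (measure_pmf (bernoulli_pmf p))"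

definition ruin_prob :: "real \<Rightarrow> real \<Rightarrow> real" where
  "ruin_prob x p = measure (coin_space p)
     {\<omega> \<in> space (coin_space p). \<exists>n. fortune x \<omega> n \<le> 0}"

end

theory Submission
  imports Defs
begin

lemma space_coin[simp]: "space (coin_space p) = UNIV"
  by (simp add: coin_space_def space_stream_space)

lemma pred_snth[measurable]: "Measurable.pred (coin_space p) (\<lambda>\<omega>. \<omega> !! k)"
proof -
  have "(\<lambda>\<omega>. \<omega> !! k) \<in> measurable (coin_space p) (measure_pmf (bernoulli_pmf p))"
    unfolding coin_space_def by (rule measurable_snth)
  then show ?thesis by (simp add: measurable_cong_sets)
qed

lemma xi_meas[measurable]: "(\<lambda>\<omega>. xi \<omega> k) \<in> borel_measurable (coin_space p)"
  unfolding xi_def by measurable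

lemma bet_meas[measurable]: "(\<lambda>\<omega>. bet \<omega> k) \<in> borel_measurable (coin_space p)"
  by (induction k) simp_all

lemma fortune_meas[measurable]: "(\<lambda>\<omega>. fortune x \<omega> k) \<in> borel_measurable (coin_space p)"
  by (induction k) simp_all

definition Y :: "nat \<Rightarrow> bool stream \<Rightarrow> real" where
  "Y n \<omega> = (\<Sum>k<n. if \<omega> !! k then bet \<omega> k else 0)"

lemma Y_meas[measurable]: "(\<lambda>\<omega>. Y n \<omega>) \<in> borel_measurable (coin_space p)"
  unfolding Y_def by measurable

lemma prob_coin: "prob_space (coin_space p)"
  unfolding coin_space_def
  by (rule prob_space.prob_space_stream_space) (rule prob_space_measure_pmf)

lemma sec_meas:
  assumes "A \<in> sets (coin_space p)"
  shows "{\<omega>. b ## \<omega> \<in> A} \<in> sets (coin_space p)"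
proof -
  have "(\<lambda>\<omega>. b ## \<omega>) \<in> measurable (coin_space p) (coin_space p)"
    unfolding coin_space_def by measurable
  from measurable_sets[OF this assms] show ?thesis by (simp add: vimage_def)
qed

lemma step_measure:
  assumes A: "A \<in> sets (coin_space p)" and p: "0 \<le> p" "p \<le> 1"
  shows "measure (coin_space p) A =
    p * measure (coin_space p) {\<omega>. True ## \<omega> \<in> A} + (1 - p) * measure (coin_space p) {\<omega>. False ## \<omega> \<in> A}"
proof -
  interpret M: prob_space "measure_pmf (bernoulli_pmf p)" by (rule prob_space_measure_pmf)
  interpret S: prob_space "coin_space p" by (rule prob_coin)
  have A': "A \<in> sets (stream_space (measure_pmf (bernoulli_pmf p)))" using A by (simp add: coin_space_def)
  have "emeasure (coin_space p) A = (\<integral>\<^sup>+t. emeasure (coin_space p) {\<omega>. t ## \<omega> \<in> A} \<partial>measure_pmf (bernoulli_pmf p))"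
    using prob_space.emeasure_stream_space[OF prob_space_measure_pmf A'] by (simp add: coin_space_def[symmetric])
  also have "\<dots> = (\<Sum>t\<in>UNIV. emeasure (coin_space p) {\<omega>. t ## \<omega> \<in> A} * ennreal (pmf (bernoulli_pmf p) t))"
    by (rule nn_integral_measure_pmf_support) auto
  also have "\<dots> = ennreal (p * measure (coin_space p) {\<omega>. True ## \<omega> \<in> A} + (1 - p) * measure (coin_space p) {\<omega>. False ## \<omega> \<in> A})"
    using p by (simp add: UNIV_bool S.emeasure_eq_measure ennreal_mult'[symmetric] ennreal_plus[symmetric] mult.commute del: ennreal_plus)
  finally have "ennreal (measure (coin_space p) A) = ennreal (p * measure (coin_space p) {\<omega>. True ## \<omega> \<in> A} + (1 - p) * measure (coin_space p) {\<omega>. False ## \<omega> \<in> A})"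
    by (simp add: S.emeasure_eq_measure)
  then show ?thesis using p by (subst (asm) ennreal_inj) auto
qed

lemma bet_pos: "bet \<omega> n > 0"
  by (induction n) auto

lemma xi_Cons[simp]: "xi (b ## \<omega>) (Suc n) = xi \<omega> n" "xi (b ## \<omega>) 0 = (if b then 1 else -1)"
  by (simp_all add: xi_def)

lemma bet_Cons: "bet (b ## \<omega>) (Suc n) = (if b then 2 else 1/2) * bet \<omega> n"
proof (induction n)
  case 0
  then show ?case by (simp add: powr_minus_divide)
next
  case (Suc n)
  then show ?case by simp
qed

lemma Y_0[simp]: "Y 0 \<omega> = 0" by (simp add: Y_def)

lemma Y_Cons_True: "Y (Suc n) (True ## \<omega>) = 1 + 2 * Y n \<omega>"
proof -
  have "(\<Sum>k<n. if (True ## \<omega>) !! Suc k then bet (True ## \<omega>) (Suc k) else 0) = (\<Sum>k<n. 2 * (if \<omega> !! k then bet \<omega> k else 0))"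
    by (intro sum.cong refl) (auto simp: bet_Cons simp del: bet.simps)
  then show ?thesis unfolding Y_def sum.lessThan_Suc_shift by (simp add: sum_distrib_left)
qed

lemma Y_Cons_False: "Y (Suc n) (False ## \<omega>) = Y n \<omega> / 2"
proof -
  have "(\<Sum>k<n. if (False ## \<omega>) !! Suc k then bet (False ## \<omega>) (Suc k) else 0) = (\<Sum>k<n. (if \<omega> !! k then bet \<omega> k else 0) / 2)"
    by (intro sum.cong refl) (auto simp: bet_Cons simp del: bet.simps)
  then show ?thesis unfolding Y_def sum.lessThan_Suc_shift by (simp add: sum_divide_distrib)
qed

lemma Y_nonneg: "Y n \<omega> \<ge> 0"
  unfolding Y_def by (rule sum_nonneg) (auto intro: less_imp_le[OF bet_pos])

lemma Y_Suc: "Y (Suc n) \<omega> = Y n \<omega> + (if \<omega> !! n then bet \<omega> n else 0)"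
  by (simp add: Y_def)

lemma Y_mono: "m \<le> n \<Longrightarrow> Y m \<omega> \<le> Y n \<omega>"
proof (induction n)
  case 0 then show ?case by simp
next
  case (Suc n)
  have "Y n \<omega> \<le> Y (Suc n) \<omega>" using bet_pos[of \<omega> n] by (simp add: Y_Suc)
  with Suc show ?case by (cases "m = Suc n") auto
qed

definition EN :: "nat \<Rightarrow> real \<Rightarrow> bool stream set" where
  "EN n c = {\<omega>. c < Y n \<omega>}"

definition E :: "real \<Rightarrow> bool stream set" where
  "E c = {\<omega>. \<exists>n. c < Y n \<omega>}"

lemma EN_meas[measurable]: "EN n c \<in> sets (coin_space p)"
proof -
  have "{\<omega> \<in> space (coin_space p). c < Y n \<omega>} \<in> sets (coin_space p)" by measurable
  then show ?thesis by (simp add: EN_def)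
qed

lemma E_meas[measurable]: "E c \<in> sets (coin_space p)"
proof -
  have "E c = (\<Union>n. EN n c)" by (auto simp: E_def EN_def)
  then show ?thesis by simp
qed

lemma E_UN: "E c = (\<Union>n. EN n c)" by (auto simp: E_def EN_def)

lemma EN_inc: "incseq (\<lambda>n. EN n c)"
  unfolding incseq_def EN_def using Y_mono by (auto intro: less_le_trans)

lemma EN_0: "EN 0 c = (if c < 0 then UNIV else {})"
  by (auto simp: EN_def)

lemma E_neg: "c < 0 \<Longrightarrow> E c = UNIV"
  by (auto simp: E_def intro: exI[of _ 0])

lemma EN_neg: "c < 0 \<Longrightarrow> EN n c = UNIV"
  using Y_nonneg by (auto simp: EN_def intro: less_le_trans)

lemma E_anti: "c \<le> d \<Longrightarrow> E d \<subseteq> E c"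
  by (auto simp: E_def intro: le_less_trans)

lemma EN_anti: "c \<le> d \<Longrightarrow> EN n d \<subseteq> EN n c"
  by (auto simp: EN_def intro: le_less_trans)

lemma EN_sec_True: "{\<omega>. True ## \<omega> \<in> EN (Suc n) c} = EN n ((c - 1) / 2)"
  by (auto simp: EN_def Y_Cons_True)

lemma EN_sec_False: "{\<omega>. False ## \<omega> \<in> EN (Suc n) c} = EN n (2 * c)"
  by (auto simp: EN_def Y_Cons_False)

lemma E_sec_True: "{\<omega>. True ## \<omega> \<in> E c} = E ((c - 1) / 2)"
proof (intro set_eqI iffI; simp)
  fix \<omega> assume "True ## \<omega> \<in> E c"
  then obtain n where n: "c < Y n (True ## \<omega>)" by (auto simp: E_def)
  show "\<omega> \<in> E ((c - 1) / 2)"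
  proof (cases n)
    case 0
    then have "(c - 1) / 2 < Y 0 \<omega>" using n by simp
    then show ?thesis unfolding E_def by blast
  next
    case (Suc m)
    then have "(c - 1) / 2 < Y m \<omega>" using n by (simp add: Y_Cons_True)
    then show ?thesis by (auto simp: E_def)
  qed
next
  fix \<omega> assume "\<omega> \<in> E ((c - 1) / 2)"
  then obtain n where "(c - 1) / 2 < Y n \<omega>" by (auto simp: E_def)
  then have "c < Y (Suc n) (True ## \<omega>)" by (simp add: Y_Cons_True)
  then show "True ## \<omega> \<in> E c" by (auto simp: E_def)
qed

lemma E_sec_False: "{\<omega>. False ## \<omega> \<in> E c} = E (2 * c)"
proof (cases "c < 0")
  case True
  then show ?thesis using E_neg[of c] E_neg[of "2*c"] by simp
next
  case False
  show ?thesis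
  proof (intro set_eqI iffI; simp)
    fix \<omega> assume "False ## \<omega> \<in> E c"
    then obtain n where n: "c < Y n (False ## \<omega>)" by (auto simp: E_def)
    show "\<omega> \<in> E (2 * c)"
    proof (cases n)
      case 0
      then show ?thesis using n False by simp
    next
      case (Suc m)
      then have "2 * c < Y m \<omega>" using n by (simp add: Y_Cons_False)
      then show ?thesis by (auto simp: E_def)
    qed
  next
    fix \<omega> assume "\<omega> \<in> E (2 * c)"
    then obtain n where "2 * c < Y n \<omega>" by (auto simp: E_def)
    then have "c < Y (Suc n) (False ## \<omega>)" by (simp add: Y_Cons_False)
    then show "False ## \<omega> \<in> E c" by (auto simp: E_def)
  qed
qed



abbreviation Pr :: "real \<Rightarrow> bool stream set \<Rightarrow> real" where
  "Pr p A \<equiv> measure (coin_space p) A"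

lemma Pr_UNIV: "Pr p UNIV = 1"
proof -
  interpret prob_space "coin_space p" by (rule prob_coin)
  show ?thesis using prob_space by simp
qed

lemma Pr_mono: "A \<in> sets (coin_space p) \<Longrightarrow> B \<in> sets (coin_space p) \<Longrightarrow> A \<subseteq> B \<Longrightarrow> Pr p A \<le> Pr p B"
proof -
  interpret prob_space "coin_space p" by (rule prob_coin)
  show "A \<in> sets (coin_space p) \<Longrightarrow> B \<in> sets (coin_space p) \<Longrightarrow> A \<subseteq> B \<Longrightarrow> Pr p A \<le> Pr p B"
    by (rule finite_measure_mono) 
qed

lemma Pr_le1: "Pr p A \<le> 1"
proof -
  interpret prob_space "coin_space p" by (rule prob_coin)
  show ?thesis by simp
qed

lemma stepE: "0 \<le> p \<Longrightarrow> p \<le> 1 \<Longrightarrow>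
  Pr p (E c) = p * Pr p (E ((c - 1) / 2)) + (1 - p) * Pr p (E (2 * c))"
  using step_measure[OF E_meas, of p c] by (simp add: E_sec_True E_sec_False)

lemma stepEN: "0 \<le> p \<Longrightarrow> p \<le> 1 \<Longrightarrow>
  Pr p (EN (Suc n) c) = p * Pr p (EN n ((c - 1) / 2)) + (1 - p) * Pr p (EN n (2 * c))"
  using step_measure[OF EN_meas, of p "Suc n" c] by (simp add: EN_sec_True EN_sec_False)

lemma EN_sub: "EN n (2 * c) \<subseteq> EN n ((c - 1) / 2)"
proof (cases "c < 0")
  case True then show ?thesis using EN_neg[of "(c-1)/2" n] by simp
next
  case False then show ?thesis by (intro EN_anti) simp
qed

lemma E_sub: "E (2 * c) \<subseteq> E ((c - 1) / 2)"
proof (cases "c < 0")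
  case True then show ?thesis using E_neg[of "(c-1)/2"] by simp
next
  case False then show ?thesis by (intro E_anti) simp
qed

lemma comb_mono:
  fixes p p' a b a' b' :: real
  assumes "0 \<le> p" "p \<le> p'" "p' \<le> 1" "a \<le> a'" "b \<le> b'" "b' \<le> a'"
  shows "p * a + (1 - p) * b \<le> p' * a' + (1 - p') * b'"
proof -
  have "p * a \<le> p * a'" using assms by (simp add: mult_left_mono)
  moreover have "(1 - p) * b \<le> (1 - p) * b'" using assms by (simp add: mult_left_mono)
  moreover have "(p' - p) * b' \<le> (p' - p) * a'" using assms by (simp add: mult_left_mono)
  ultimately show ?thesis by (simp add: algebra_simps)
qed

lemma monoEN:
  assumes "0 \<le> p" "p \<le> p'" "p' \<le> 1"
  shows "Pr p (EN n c) \<le> Pr p' (EN n c)"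
  using assms
proof (induction n arbitrary: c)
  case 0
  then show ?case by (simp add: EN_0 Pr_UNIV)
next
  case (Suc n)
  have "Pr p (EN (Suc n) c) = p * Pr p (EN n ((c - 1) / 2)) + (1 - p) * Pr p (EN n (2 * c))"
    using Suc.prems by (intro stepEN) auto
  also have "\<dots> \<le> p' * Pr p' (EN n ((c - 1) / 2)) + (1 - p') * Pr p' (EN n (2 * c))"
    by (rule comb_mono) (use Suc in \<open>auto intro: Pr_mono[OF EN_meas EN_meas EN_sub]\<close>)
  also have "\<dots> = Pr p' (EN (Suc n) c)"
    using Suc.prems by (intro stepEN[symmetric]) auto
  finally show ?case .
qed

lemma Pr_E_lim: "(\<lambda>n. Pr p (EN n c)) \<longlonglongrightarrow> Pr p (E c)"
proof -
  interpret prob_space "coin_space p" by (rule prob_coin)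
  have "(\<lambda>n. Pr p (EN n c)) \<longlonglongrightarrow> Pr p (\<Union>n. EN n c)"
    by (rule finite_Lim_measure_incseq) (auto intro: EN_inc)
  then show ?thesis by (simp add: E_UN)
qed

lemma monoE:
  assumes "0 \<le> p" "p \<le> p'" "p' \<le> 1"
  shows "Pr p (E c) \<le> Pr p' (E c)"
  by (rule LIMSEQ_le[OF Pr_E_lim Pr_E_lim]) (use monoEN[OF assms] in auto)

lemma strictE:
  assumes p: "0 < p" "p < p'" "p' < 1"
    and H: "\<And>d. 0 < d \<Longrightarrow> Pr p' (E d) < 1"
  shows "0 < c \<Longrightarrow> c \<le> (real j + 1) / 2 \<Longrightarrow> Pr p (E c) < Pr p' (E c)"
proof (induction j arbitrary: c)
  have D: "Pr p' (E c) - Pr p (E c) = p * (Pr p' (E ((c - 1) / 2)) - Pr p (E ((c - 1) / 2)))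
     + (1 - p) * (Pr p' (E (2 * c)) - Pr p (E (2 * c)))
     + (p' - p) * (Pr p' (E ((c - 1) / 2)) - Pr p' (E (2 * c)))" for c
    using stepE[of p c] stepE[of p' c] p by (simp add: algebra_simps)
  have M: "0 \<le> Pr p' (E d) - Pr p (E d)" for d using monoE[of p p' d] p by simp
  have S: "0 \<le> Pr p' (E ((c - 1) / 2)) - Pr p' (E (2 * c))" for c
    using Pr_mono[OF E_meas E_meas E_sub, of p' c] by simp
  {
    case 0
    then have "(c - 1) / 2 < 0" by simp
    then have "Pr p' (E ((c - 1) / 2)) = 1" by (simp add: E_neg Pr_UNIV)
    moreover have "Pr p' (E (2 * c)) < 1" using H[of "2 * c"] 0 by simp
    ultimately have "0 < (p' - p) * (Pr p' (E ((c - 1) / 2)) - Pr p' (E (2 * c)))"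
      using p by simp
    moreover have "0 \<le> p * (Pr p' (E ((c - 1) / 2)) - Pr p (E ((c - 1) / 2)))"
      using M p by simp
    moreover have "0 \<le> (1 - p) * (Pr p' (E (2 * c)) - Pr p (E (2 * c)))"
      using M p by simp
    ultimately show ?case using D[of c] by linarith
  next
    case (Suc j)
    show ?case
    proof (cases "c \<le> (real j + 1) / 2")
      case True then show ?thesis using Suc by blast
    next
      case False
      have c2: "0 < c - 1/2" "c - 1/2 \<le> (real j + 1) / 2" using False Suc.prems by auto
      have "0 < Pr p' (E (c - 1/2)) - Pr p (E (c - 1/2))" using Suc.IH[OF c2] by simp
      moreover have "(2 * c - 1) / 2 = c - 1/2" by simp
      ultimately have "0 < p * (Pr p' (E ((2 * c - 1) / 2)) - Pr p (E ((2 * c - 1) / 2)))"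
        using p by (simp only:) (rule mult_pos_pos)
      then have "0 < Pr p' (E (2 * c)) - Pr p (E (2 * c))"
        using D[of "2 * c"] M[of "2 * (2 * c)"] S[of "2 * c"] p
        by (smt (verit) mult_nonneg_nonneg)
      then have "0 < (1 - p) * (Pr p' (E (2 * c)) - Pr p (E (2 * c)))" using p by simp
      then show ?thesis
        using D[of c] M[of "(c - 1) / 2"] S[of c] p
        by (smt (verit) mult_nonneg_nonneg)
    qed
  }
qed

lemma powr_subadd:
  fixes u v a :: real
  assumes "0 \<le> u" "0 \<le> v" "0 < a" "a \<le> 1"
  shows "(u + v) powr a \<le> u powr a + v powr a"
proof (cases "u + v = 0")
  case True then show ?thesis using assms by simp
next
  case False
  define s where "s = u + v"
  have s: "0 < s" using False assms s_def by simp
  have "u / s \<le> (u / s) powr a"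
    using powr_mono'[of a 1 "u / s"] assms s s_def by (simp add: divide_le_eq_1)
  moreover have "v / s \<le> (v / s) powr a"
    using powr_mono'[of a 1 "v / s"] assms s s_def by (simp add: divide_le_eq_1)
  moreover have "u / s + v / s = 1" using s s_def by (simp add: add_divide_distrib[symmetric])
  ultimately have "1 \<le> (u / s) powr a + (v / s) powr a"
    by linarith
  also have "\<dots> = (u powr a + v powr a) / s powr a"
    using assms s by (simp add: powr_divide add_divide_distrib)
  finally show ?thesis using s by (simp add: s_def le_divide_eq)
qed

lemma moment:
  assumes p: "0 \<le> p" "p \<le> 1"
  shows "(\<integral>\<^sup>+\<omega>. ennreal (bet \<omega> n powr a) \<partial>coin_space p)
       = ennreal ((p * 2 powr a + (1 - p) * (1/2) powr a) ^ n)"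
proof (induction n)
  case 0
  interpret prob_space "coin_space p" by (rule prob_coin)
  show ?case using emeasure_space_1 by simp
next
  case (Suc n)
  interpret M: prob_space "measure_pmf (bernoulli_pmf p)" by (rule prob_space_measure_pmf)
  let ?r = "p * 2 powr a + (1 - p) * (1/2) powr a"
  have r0: "0 \<le> ?r" using p by simp
  have meas: "(\<lambda>\<omega>. ennreal (bet \<omega> (Suc n) powr a)) \<in> borel_measurable (stream_space (measure_pmf (bernoulli_pmf p)))"
    using bet_meas[of "Suc n" p] unfolding coin_space_def by measurable
  have "(\<integral>\<^sup>+\<omega>. ennreal (bet \<omega> (Suc n) powr a) \<partial>coin_space p)
     = (\<integral>\<^sup>+b. (\<integral>\<^sup>+\<omega>. ennreal (bet (b ## \<omega>) (Suc n) powr a) \<partial>coin_space p) \<partial>measure_pmf (bernoulli_pmf p))"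
    unfolding coin_space_def by (rule prob_space.nn_integral_stream_space[OF prob_space_measure_pmf meas])
  also have "\<dots> = (\<integral>\<^sup>+b. ennreal ((if b then 2 else 1/2) powr a) * ennreal (?r ^ n) \<partial>measure_pmf (bernoulli_pmf p))"
  proof (rule nn_integral_cong)
    fix b
    have "(\<integral>\<^sup>+\<omega>. ennreal (bet (b ## \<omega>) (Suc n) powr a) \<partial>coin_space p)
        = (\<integral>\<^sup>+\<omega>. ennreal ((if b then 2 else 1/2) powr a) * ennreal (bet \<omega> n powr a) \<partial>coin_space p)"
      by (rule nn_integral_cong) (simp add: bet_Cons powr_mult ennreal_mult' del: bet.simps)
    also have "\<dots> = ennreal ((if b then 2 else 1/2) powr a) * (\<integral>\<^sup>+\<omega>. ennreal (bet \<omega> n powr a) \<partial>coin_space p)"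
      by (rule nn_integral_cmult) simp
    finally show "(\<integral>\<^sup>+\<omega>. ennreal (bet (b ## \<omega>) (Suc n) powr a) \<partial>coin_space p)
        = ennreal ((if b then 2 else 1/2) powr a) * ennreal (?r ^ n)" using Suc by simp
  qed
  also have "\<dots> = (\<Sum>b\<in>UNIV. ennreal ((if b then 2 else 1/2) powr a) * ennreal (?r ^ n) * ennreal (pmf (bernoulli_pmf p) b))"
    by (rule nn_integral_measure_pmf_support) auto
  also have "\<dots> = ennreal (2 powr a * ?r^n * p) + ennreal ((1/2) powr a * ?r^n * (1-p))"
    using p r0 by (simp add: UNIV_bool ennreal_mult')
  also have "\<dots> = ennreal (2 powr a * ?r^n * p + (1/2) powr a * ?r^n * (1-p))"
    using p r0 by (intro ennreal_plus[symmetric]) auto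
  also have "2 powr a * ?r^n * p + (1/2) powr a * ?r^n * (1-p) = ?r ^ Suc n"
    by (simp add: algebra_simps)
  finally show ?case .
qed

lemma markov:
  assumes g[measurable]: "g \<in> borel_measurable (coin_space p)" and d: "0 < \<delta>" and K: "0 \<le> K"
    and I: "(\<integral>\<^sup>+\<omega>. ennreal (g \<omega>) \<partial>coin_space p) \<le> ennreal K"
  shows "Pr p {\<omega>. \<delta> \<le> g \<omega>} \<le> K / \<delta>"
proof -
  interpret prob_space "coin_space p" by (rule prob_coin)
  let ?S = "{\<omega>. \<delta> \<le> g \<omega>}"
  have S: "?S \<in> sets (coin_space p)"
  proof -
    have "{\<omega> \<in> space (coin_space p). \<delta> \<le> g \<omega>} \<in> sets (coin_space p)" by measurable
    then show ?thesis by simp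
  qed
  have "ennreal \<delta> * emeasure (coin_space p) ?S = (\<integral>\<^sup>+\<omega>. ennreal \<delta> * indicator ?S \<omega> \<partial>coin_space p)"
    using S by (simp add: nn_integral_cmult_indicator)
  also have "\<dots> \<le> (\<integral>\<^sup>+\<omega>. ennreal (g \<omega>) \<partial>coin_space p)"
    by (rule nn_integral_mono) (auto split: split_indicator intro: ennreal_leI)
  also have "\<dots> \<le> ennreal K" by (rule I)
  finally have "ennreal (\<delta> * Pr p ?S) \<le> ennreal K"
    using d by (simp add: emeasure_eq_measure ennreal_mult')
  then have "\<delta> * Pr p ?S \<le> K" using K by (simp add: ennreal_le_iff)
  then show ?thesis using d by (simp add: le_divide_eq mult.commute)
qed

lemma exists_a:
  fixes p :: real
  assumes p: "0 < p" "p < 1/2"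
  shows "\<exists>a. 0 < a \<and> a \<le> 1 \<and> p * 2 powr a + (1 - p) * (1/2) powr a < 1"
proof -
  define t where "t = (1 + min 2 ((1 - p) / p)) / 2"
  have q: "1 < (1 - p) / p" using p by (simp add: field_simps)
  have t1: "1 < t" using q by (simp add: t_def)
  have t2: "t \<le> 2" by (simp add: t_def)
  have aux: "(1 + min 2 Q) / 2 < Q" if "1 < Q" for Q :: real using that by (simp add: min_def)
  have t3: "t < (1 - p) / p" using aux[OF q] unfolding t_def .
  then have t4: "p * t < 1 - p" using p by (simp add: field_simps)
  define a where "a = log 2 t"
  have ta: "2 powr a = t" using t1 by (simp add: a_def)
  have ta': "(1/2) powr a = 1 / t" using ta by (simp add: powr_divide)
  have "(p * t - (1 - p)) * (t - 1) < 0" using t1 t4 by (simp add: mult_neg_pos)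
  then have "p * t * t + (1 - p) < t" by (simp add: algebra_simps)
  then have "p * t + (1 - p) / t < 1" using t1 by (simp add: field_simps)
  moreover have "0 < a" using t1 by (simp add: a_def)
  moreover have "a \<le> 1" using t1 t2 by (simp add: a_def)
  ultimately show ?thesis using ta ta' by (intro exI[of _ a]) simp
qed

lemma Y_powr_le:
  assumes "0 < a" "a \<le> 1"
  shows "Y n \<omega> powr a \<le> (\<Sum>k<n. bet \<omega> k powr a)"
proof (induction n)
  case 0 then show ?case by simp
next
  case (Suc n)
  let ?t = "if \<omega> !! n then bet \<omega> n else 0"
  have "Y (Suc n) \<omega> powr a \<le> Y n \<omega> powr a + ?t powr a"
    unfolding Y_Suc by (rule powr_subadd) (use assms Y_nonneg bet_pos[of \<omega> n] in \<open>auto intro: less_imp_le\<close>)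
  also have "?t powr a \<le> bet \<omega> n powr a" by simp
  finally show ?case using Suc by simp
qed

lemma E_bound:
  assumes p: "0 < p" "p < 1/2"
  shows "\<exists>C. Pr p (E C) < 1"
proof -
  obtain a where a: "0 < a" "a \<le> 1" and r: "p * 2 powr a + (1 - p) * (1/2) powr a < 1"
    using exists_a[OF p] by blast
  define r where "r = p * 2 powr a + (1 - p) * (1/2) powr a"
  have r0: "0 \<le> r" "r < 1" using p r by (simp_all add: r_def)
  define K where "K = 1 / (1 - r)"
  have K0: "0 < K" using r0 by (simp add: K_def)
  define C where "C = (2 * K) powr (1 / a)"
  have C0: "0 < C" using K0 by (simp add: C_def)
  have CA: "C powr a = 2 * K" using K0 a by (simp add: C_def powr_powr)
  have "Pr p (EN n C) \<le> K / C powr a" for n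
  proof -
    have int: "(\<integral>\<^sup>+\<omega>. ennreal (Y n \<omega> powr a) \<partial>coin_space p) \<le> ennreal K"
    proof -
      have "(\<integral>\<^sup>+\<omega>. ennreal (Y n \<omega> powr a) \<partial>coin_space p) \<le> (\<integral>\<^sup>+\<omega>. (\<Sum>k<n. ennreal (bet \<omega> k powr a)) \<partial>coin_space p)"
        by (rule nn_integral_mono) (simp add: sum_ennreal ennreal_leI Y_powr_le[OF a])
      also have "\<dots> = (\<Sum>k<n. (\<integral>\<^sup>+\<omega>. ennreal (bet \<omega> k powr a) \<partial>coin_space p))"
        by (rule nn_integral_sum) simp
      also have "\<dots> = (\<Sum>k<n. ennreal (r ^ k))"
        using p by (simp add: moment r_def)
      also have "\<dots> = ennreal (\<Sum>k<n. r ^ k)" using r0 by (simp add: sum_ennreal)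
      also have "(\<Sum>k<n. r ^ k) \<le> K"
        using r0 by (simp add: K_def sum_gp_strict divide_right_mono)
      finally show ?thesis by (simp add: ennreal_leI)
    qed
    have "Pr p {\<omega>. C powr a \<le> Y n \<omega> powr a} \<le> K / C powr a"
      by (rule markov[OF _ _ _ int]) (use C0 K0 in auto)
    moreover have "EN n C \<subseteq> {\<omega>. C powr a \<le> Y n \<omega> powr a}"
      using C0 a by (auto simp: EN_def intro: powr_mono2)
    moreover have "{\<omega>. C powr a \<le> Y n \<omega> powr a} \<in> sets (coin_space p)"
    proof -
      have "{\<omega> \<in> space (coin_space p). C powr a \<le> Y n \<omega> powr a} \<in> sets (coin_space p)" by measurable
      then show ?thesis by simp
    qed
    ultimately show ?thesis using Pr_mono[OF EN_meas] by (meson order.trans)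
  qed
  then have "Pr p (E C) \<le> K / C powr a"
    by (intro LIMSEQ_le_const2[OF Pr_E_lim]) auto
  also have "\<dots> = 1/2" using CA K0 by simp
  finally show ?thesis by (intro exI[of _ C]) simp
qed

lemma E_lt1:
  assumes p: "0 < p" "p < 1/2" and d: "0 < d"
  shows "Pr p (E d) < 1"
proof -
  obtain C where C: "Pr p (E C) < 1" using E_bound[OF p] by blast
  have gen: "1 - Pr p (E d) \<ge> (1 - p) ^ j * (1 - Pr p (E (2 ^ j * d)))" for j d
  proof (induction j arbitrary: d)
    case 0 then show ?case by simp
  next
    case (Suc j)
    have "Pr p (E d) = p * Pr p (E ((d - 1) / 2)) + (1 - p) * Pr p (E (2 * d))"
      using p by (intro stepE) auto
    then have "1 - Pr p (E d) - (1 - p) * (1 - Pr p (E (2 * d))) = p * (1 - Pr p (E ((d - 1) / 2)))"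
      by (simp add: algebra_simps)
    moreover have "0 \<le> p * (1 - Pr p (E ((d - 1) / 2)))" using p Pr_le1[of p] by simp
    ultimately have "1 - Pr p (E d) \<ge> (1 - p) * (1 - Pr p (E (2 * d)))"
      by linarith
    moreover have "1 - Pr p (E (2 * d)) \<ge> (1 - p) ^ j * (1 - Pr p (E (2 ^ j * (2 * d))))"
      by (rule Suc.IH)
    then have "(1 - p) * (1 - Pr p (E (2 * d))) \<ge> (1 - p) * ((1 - p) ^ j * (1 - Pr p (E (2 ^ j * (2 * d)))))"
      using p by (intro mult_left_mono) auto
    moreover have "2 ^ j * (2 * d) = 2 ^ Suc j * d" by simp
    ultimately show ?case by (simp only: power_Suc mult.assoc)
  qed
  obtain j where j: "C / d < 2 ^ j" using real_arch_pow[of 2 "C / d"] by auto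
  then have "C \<le> 2 ^ j * d" using d by (simp add: divide_less_eq)
  then have "Pr p (E (2 ^ j * d)) \<le> Pr p (E C)" by (intro Pr_mono[OF E_meas E_meas] E_anti)
  then have "0 < (1 - p) ^ j * (1 - Pr p (E (2 ^ j * d)))" using C p by simp
  with gen[of j d] show ?thesis by simp
qed

lemma fortune_eq: "fortune x \<omega> n = x - 2 + 2 * bet \<omega> n - Y n \<omega>"
proof (induction n)
  case 0 then show ?case by simp
next
  case (Suc n)
  then show ?case by (cases "\<omega> !! n") (auto simp: Y_Suc xi_def powr_minus_divide)
qed

lemma bet_small:
  assumes p: "0 < p" "p < 1/2" and d: "0 < \<delta>"
  shows "AE \<omega> in coin_space p. \<exists>n\<ge>N. bet \<omega> n < \<delta>"
proof -
  interpret prob_space "coin_space p" by (rule prob_coin)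
  obtain a where a: "0 < a" "a \<le> 1" and r: "p * 2 powr a + (1 - p) * (1/2) powr a < 1"
    using exists_a[OF p] by blast
  define r where "r = p * 2 powr a + (1 - p) * (1/2) powr a"
  have r0: "0 \<le> r" "r < 1" using p r by (simp_all add: r_def)
  define B where "B = {\<omega>. \<forall>n\<ge>N. \<delta> \<le> bet \<omega> n}"
  have B: "B \<in> sets (coin_space p)"
  proof -
    have "{\<omega> \<in> space (coin_space p). \<forall>n. N \<le> n \<longrightarrow> \<delta> \<le> bet \<omega> n} \<in> sets (coin_space p)" by measurable
    then show ?thesis by (simp add: B_def)
  qed
  have bnd: "Pr p B \<le> r ^ n / \<delta> powr a" if n: "N \<le> n" for n
  proof -
    have S: "{\<omega>. \<delta> powr a \<le> bet \<omega> n powr a} \<in> sets (coin_space p)"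
    proof -
      have "{\<omega> \<in> space (coin_space p). \<delta> powr a \<le> bet \<omega> n powr a} \<in> sets (coin_space p)" by measurable
      then show ?thesis by simp
    qed
    have "B \<subseteq> {\<omega>. \<delta> powr a \<le> bet \<omega> n powr a}"
      using n d a by (auto simp: B_def intro: powr_mono2)
    then have "Pr p B \<le> Pr p {\<omega>. \<delta> powr a \<le> bet \<omega> n powr a}"
      by (rule Pr_mono[OF B S])
    also have "\<dots> \<le> r ^ n / \<delta> powr a"
      by (rule markov) (use d r0 p in \<open>auto simp: moment r_def\<close>)
    finally show ?thesis .
  qed
  have "(\<lambda>n. r ^ n / \<delta> powr a) \<longlonglongrightarrow> 0"
    by (intro tendsto_divide_zero LIMSEQ_power_zero) (use r0 in auto)
  then have "Pr p B \<le> 0"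
    by (rule LIMSEQ_le_const) (use bnd in auto)
  then have "B \<in> null_sets (coin_space p)"
    using B by (simp add: null_sets_def emeasure_eq_measure measure_nonneg antisym)
  then show ?thesis
    by (rule AE_I') (auto simp: B_def not_less)
qed

lemma ruin_eq:
  assumes p: "0 < p" "p < 1/2"
  shows "ruin_prob x p = Pr p (E (x - 2))"
proof -
  interpret prob_space "coin_space p" by (rule prob_coin)
  define R where "R = {\<omega>. \<exists>n. fortune x \<omega> n \<le> 0}"
  have R: "R \<in> sets (coin_space p)"
  proof -
    have "{\<omega> \<in> space (coin_space p). \<exists>n. fortune x \<omega> n \<le> 0} \<in> sets (coin_space p)" by measurable
    then show ?thesis by (simp add: R_def)
  qed
  have "AE \<omega> in coin_space p. \<forall>j::nat. \<forall>N::nat. \<exists>n\<ge>N. bet \<omega> n < 1 / Suc j"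
    using bet_small[OF p] by (simp add: AE_all_countable)
  then have "AE \<omega> in coin_space p. \<omega> \<in> R \<longleftrightarrow> \<omega> \<in> E (x - 2)"
  proof (rule AE_mp, intro AE_I2 impI iffI)
    fix \<omega> assume "\<omega> \<in> R"
    then obtain n where "fortune x \<omega> n \<le> 0" by (auto simp: R_def)
    then have "x - 2 < Y n \<omega>" using bet_pos[of \<omega> n] by (simp add: fortune_eq)
    then show "\<omega> \<in> E (x - 2)" by (auto simp: E_def)
  next
    fix \<omega> assume H: "\<forall>j::nat. \<forall>N::nat. \<exists>n\<ge>N. bet \<omega> n < 1 / Suc j" and "\<omega> \<in> E (x - 2)"
    then obtain N where N: "x - 2 < Y N \<omega>" by (auto simp: E_def)
    define \<epsilon> where "\<epsilon> = Y N \<omega> - (x - 2)"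
    have e: "0 < \<epsilon> / 2" using N by (simp add: \<epsilon>_def)
    obtain j :: nat where j: "inverse (real (Suc j)) < \<epsilon> / 2" using reals_Archimedean[OF e] by blast
    obtain n where n: "N \<le> n" "bet \<omega> n < 1 / Suc j" using H by blast
    have "Y N \<omega> \<le> Y n \<omega>" using n(1) by (rule Y_mono)
    moreover have "bet \<omega> n < \<epsilon> / 2" using n(2) j by (simp add: inverse_eq_divide)
    then have "2 * bet \<omega> n < \<epsilon>" by simp
    ultimately have "fortune x \<omega> n \<le> 0" unfolding fortune_eq \<epsilon>_def by linarith
    then show "\<omega> \<in> R" by (auto simp: R_def)
  qed
  then have "Pr p R = Pr p (E (x - 2))" by (rule measure_eq_AE[OF _ R E_meas])
  moreover have "ruin_prob x p = Pr p R" by (simp add: ruin_prob_def R_def)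
  ultimately show ?thesis by simp
qed

theorem corollary1p4:
  fixes x :: real
  assumes "x > 2"
  shows "strict_mono_on {0<..<1/2} (\<lambda>p. ruin_prob x p)"
proof (rule strict_mono_onI)
  fix p p' :: real assume p: "p \<in> {0<..<1/2}" "p' \<in> {0<..<1/2}" "p < p'"
  define c where "c = x - 2"
  have c: "0 < c" using assms by (simp add: c_def)
  define j where "j = nat \<lceil>2 * c\<rceil>"
  have "2 * c \<le> real j" unfolding j_def by linarith
  then have cj: "c \<le> (real j + 1) / 2" by simp
  have "Pr p (E c) < Pr p' (E c)"
    by (rule strictE[OF _ _ _ _ c cj]) (use p in \<open>auto intro: E_lt1\<close>)
  then show "ruin_prob x p < ruin_prob x p'"
    using p by (simp add: ruin_eq c_def)
qed

end
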